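(* Consider the parallel multiple access channel power allocation game and the replicator dynamics described in the context. Let $q\in\Delta$ be the (almost surely unique) Nash equilibrium of the game. Then every solution orbit $p(t)$ of the replicator dynamics whose initial point $p(0)$ has finite Kullback–Leibler divergence $H_q(p(0))<\infty$ converges to $q$ as $t\to\infty$. Furthermore, even if the game does not admit a unique Nash equilibrium, every solution trajectory starting in the interior of $\Delta$ converges to a Nash equilibrium (a single point, not merely to the set of Nash equilibria).
   Context: Setting: users $\mathcal{K}=\{1,\dots,K\}$, nodes $\mathcal{A}=\{1,\dots,A\}$. User $k$ has maximum power $P_k>0$ and strategy set $\Delta_k=\{p_k\in\mathbb{R}^{\mathcal{A}}: p_{k\alpha}\ge 0,\ \sum_\alpha p_{k\alpha}=P_k\}$; $\Delta=\prod_k\Delta_k$. Payoffs: $u_k(p)=\sum_{\alpha} b_\alpha\log\bigl(1+\frac{g_{k\alpha}p_{k\alpha}}{\sigma_\alpha^2+\sum_{\ell\neq k}g_{\ell\alpha}p_{\ell\alpha}}\bigr)$ with constants $b_\alpha>0$, $\sigma_\alpha^2>0$ and channel gains $g_{k\alpha}>0$ drawn from a continuous (nonatomic) probability distribution on the positive reals. $q\in\Delta$ is a Nash equilibrium if $u_k(q)\ge u_k(q_{-k};q_k')$ for all $k$ and $q_k'\in\Delta_k$. Define $v_{k\alpha}(p)=\frac{b_\alpha g_{k\alpha}}{\sigma_\alpha^2+\sum_{\ell}g_{\ell\alpha}p_{\ell\alpha}}$ and $v_k(p)=P_k^{-1}\sum_\beta p_{k\beta}v_{k\beta}(p)$. The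 replicator dynamics are the ODE $\frac{dp_{k\alpha}}{dt}=p_{k\alpha}\bigl(v_{k\alpha}(p(t))-v_k(p(t))\bigr)$ on $\Delta$. The Kullback–Leibler divergence of $p$ with respect to $q$ is $H_q(p)=\sum_{k,\alpha}q_{k\alpha}\log(q_{k\alpha}/p_{k\alpha})$ (terms with $q_{k\alpha}=0$ are zero), finite iff $p_{k\alpha}>0$ whenever $q_{k\alpha}>0$. *)

theory Defs
  imports "HOL-Analysis.Analysis"
begin

text \<open>Users are indexed by {1..K}, nodes by {1..A}. A power profile is
  p :: nat => nat => real with p k a the power of user k on node a
  (values outside the index ranges are irrelevant).
  s a stands for the noise variance sigma_a^2.\<close>

definition strat_k :: "nat \<Rightarrow> (nat \<Rightarrow> real) \<Rightarrow> real \<Rightarrow> bool" where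
  "strat_k A r Pk \<longleftrightarrow> (\<forall>a\<in>{1..A}. 0 \<le> r a) \<and> (\<Sum>a=1..A. r a) = Pk"

definition in_Delta :: "nat \<Rightarrow> nat \<Rightarrow> (nat \<Rightarrow> real) \<Rightarrow> (nat \<Rightarrow> nat \<Rightarrow> real) \<Rightarrow> bool" where
  "in_Delta K A P p \<longleftrightarrow> (\<forall>k\<in>{1..K}. strat_k A (p k) (P k))"

definition payoff ::
  "nat \<Rightarrow> nat \<Rightarrow> (nat \<Rightarrow> real) \<Rightarrow> (nat \<Rightarrow> real) \<Rightarrow> (nat \<Rightarrow> nat \<Rightarrow> real)
   \<Rightarrow> (nat \<Rightarrow> nat \<Rightarrow> real) \<Rightarrow> nat \<Rightarrow> real" where
  "payoff K A b s g p k =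
     (\<Sum>a=1..A. b a * ln (1 + g k a * p k a / (s a + (\<Sum>l\<in>{1..K} - {k}. g l a * p l a))))"

definition nash_eq ::
  "nat \<Rightarrow> nat \<Rightarrow> (nat \<Rightarrow> real) \<Rightarrow> (nat \<Rightarrow> real) \<Rightarrow> (nat \<Rightarrow> real)
   \<Rightarrow> (nat \<Rightarrow> nat \<Rightarrow> real) \<Rightarrow> (nat \<Rightarrow> nat \<Rightarrow> real) \<Rightarrow> bool" where
  "nash_eq K A P b s g q \<longleftrightarrow> in_Delta K A P q \<and>
     (\<forall>k\<in>{1..K}. \<forall>r. strat_k A r (P k) \<longrightarrow>
        payoff K A b s g (q(k := r)) k \<le> payoff K A b s g q k)"

definition vel ::
  "nat \<Rightarrow> (nat \<Rightarrow> real) \<Rightarrow> (nat \<Rightarrow> real) \<Rightarrow> (nat \<Rightarrow> nat \<Rightarrow> real)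
   \<Rightarrow> (nat \<Rightarrow> nat \<Rightarrow> real) \<Rightarrow> nat \<Rightarrow> nat \<Rightarrow> real" where
  "vel K b s g p k a = b a * g k a / (s a + (\<Sum>l=1..K. g l a * p l a))"

definition vel_avg ::
  "nat \<Rightarrow> nat \<Rightarrow> (nat \<Rightarrow> real) \<Rightarrow> (nat \<Rightarrow> real) \<Rightarrow> (nat \<Rightarrow> real)
   \<Rightarrow> (nat \<Rightarrow> nat \<Rightarrow> real) \<Rightarrow> (nat \<Rightarrow> nat \<Rightarrow> real) \<Rightarrow> nat \<Rightarrow> real" where
  "vel_avg K A P b s g p k = (\<Sum>c=1..A. p k c * vel K b s g p k c) / P k"

definition replicator_solution ::
  "nat \<Rightarrow> nat \<Rightarrow> (nat \<Rightarrow> real) \<Rightarrow> (nat \<Rightarrow> real) \<Rightarrow> (nat \<Rightarrow> real)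
   \<Rightarrow> (nat \<Rightarrow> nat \<Rightarrow> real) \<Rightarrow> (real \<Rightarrow> nat \<Rightarrow> nat \<Rightarrow> real) \<Rightarrow> bool" where
  "replicator_solution K A P b s g p \<longleftrightarrow>
     (\<forall>t\<ge>0. in_Delta K A P (p t)) \<and>
     (\<forall>t\<ge>0. \<forall>k\<in>{1..K}. \<forall>a\<in>{1..A}.
        ((\<lambda>\<tau>. p \<tau> k a) has_real_derivative
           p t k a * (vel K b s g (p t) k a - vel_avg K A P b s g (p t) k))
        (at t within {0..}))"

text \<open>H_q(p) < \<infinity>  iff  p k a > 0 whenever q k a > 0.\<close>
definition KL_finite :: "nat \<Rightarrow> nat \<Rightarrow> (nat \<Rightarrow> nat \<Rightarrow> real) \<Rightarrow> (nat \<Rightarrow> nat \<Rightarrow> real) \<Rightarrow> bool" where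
  "KL_finite K A q p \<longleftrightarrow> (\<forall>k\<in>{1..K}. \<forall>a\<in>{1..A}. 0 < q k a \<longrightarrow> 0 < p k a)"

definition interior_profile :: "nat \<Rightarrow> nat \<Rightarrow> (nat \<Rightarrow> nat \<Rightarrow> real) \<Rightarrow> bool" where
  "interior_profile K A p \<longleftrightarrow> (\<forall>k\<in>{1..K}. \<forall>a\<in>{1..A}. 0 < p k a)"

definition converges_to ::
  "nat \<Rightarrow> nat \<Rightarrow> (real \<Rightarrow> nat \<Rightarrow> nat \<Rightarrow> real) \<Rightarrow> (nat \<Rightarrow> nat \<Rightarrow> real) \<Rightarrow> bool" where
  "converges_to K A p q \<longleftrightarrow>
     (\<forall>k\<in>{1..K}. \<forall>a\<in>{1..A}. ((\<lambda>t. p t k a) \<longlongrightarrow> q k a) at_top)"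

end

theory Submission
  imports Defs
begin

lemma mono_from_deriv:
  fixes f f' :: "real \<Rightarrow> real"
  assumes d: "\<And>t. T \<le> t \<Longrightarrow> (f has_real_derivative f' t) (at t within {0..})"
    and nn: "\<And>t. T \<le> t \<Longrightarrow> 0 \<le> f' t" and T: "0 \<le> T" and xy: "T \<le> x" "x \<le> y"
  shows "f x \<le> f y"
proof (rule DERIV_nonneg_imp_increasing_open[OF xy(2)])
  fix z assume z: "x < z" "z < y"
  have "z \<in> interior {0::real..}" using z T xy by (simp add: interior_real_atLeast)
  hence "at z within {0..} = at z" by (rule at_within_interior)
  then show "\<exists>y. (f has_real_derivative y) (at z) \<and> 0 \<le> y"
    using d[of z] nn[of z] z xy by auto
next
  show "continuous_on {x..y} f"
    unfolding continuous_on_eq_continuous_within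
  proof
    fix z assume z: "z \<in> {x..y}"
    have "continuous (at z within {0..}) f" using d[of z] z xy by (auto intro: DERIV_continuous)
    then show "continuous (at z within {x..y}) f"
      by (rule continuous_within_subset) (use T xy in auto)
  qed
qed

lemma BW_finite:
  fixes x :: "nat \<Rightarrow> 'i \<Rightarrow> real"
  assumes "finite I" "\<And>n i. i \<in> I \<Longrightarrow> \<bar>x n i\<bar> \<le> B"
  shows "\<exists>r l. strict_mono r \<and> (\<forall>i\<in>I. (\<lambda>n. x (r n) i) \<longlonglongrightarrow> l i)"
  using assms
proof (induction I rule: finite_induct)
  case empty
  show ?case by (rule exI[of _ id]) (auto simp: strict_mono_def)
next
  case (insert j I)
  then obtain r l where r: "strict_mono r" "\<forall>i\<in>I. (\<lambda>n. x (r n) i) \<longlonglongrightarrow> l i" by auto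
  have "bounded (range (\<lambda>n. x (r n) j))"
    unfolding bounded_iff using insert.prems by auto
  then obtain l' r' where r': "strict_mono r'" "((\<lambda>n. x (r n) j) \<circ> r') \<longlonglongrightarrow> l'"
    using bounded_imp_convergent_subsequence by blast
  show ?case
  proof (intro exI conjI ballI)
    show "strict_mono (r \<circ> r')" using r r' by (simp add: strict_mono_o)
    fix i assume i: "i \<in> insert j I"
    show "(\<lambda>n. x ((r \<circ> r') n) i) \<longlonglongrightarrow> (l(j := l')) i"
    proof (cases "i = j")
      case True thus ?thesis using r' by (simp add: o_def)
    next
      case False
      then have "i \<in> I" using i by auto
      then have "((\<lambda>n. x (r n) i) \<circ> r') \<longlonglongrightarrow> l i" using r r' LIMSEQ_subseq_LIMSEQ by blast
      thus ?thesis using False by (simp add: o_def)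
    qed
  qed
qed


locale mac =
  fixes K A :: nat and P b s :: "nat \<Rightarrow> real" and g :: "nat \<Rightarrow> nat \<Rightarrow> real"
  assumes Ppos: "\<forall>k\<in>{1..K}. 0 < P k"
    and bpos: "\<forall>a\<in>{1..A}. 0 < b a"
    and spos: "\<forall>a\<in>{1..A}. 0 < s a"
    and gpos: "\<forall>k\<in>{1..K}. \<forall>a\<in>{1..A}. 0 < g k a"
begin

definition SS where "SS p a = s a + (\<Sum>l=1..K. g l a * p l a)"
definition Phi where "Phi p = (\<Sum>a=1..A. b a * ln (SS p a))"
definition is_max where "is_max q \<longleftrightarrow> in_Delta K A P q \<and> (\<forall>r. in_Delta K A P r \<longrightarrow> Phi r \<le> Phi q)"
definition Hq where "Hq q p = (\<Sum>k=1..K. \<Sum>a=1..A. (if 0 < q k a then q k a * (ln (q k a) - ln (p k a)) else 0))"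

lemma D_nonneg: "in_Delta K A P p \<Longrightarrow> k\<in>{1..K} \<Longrightarrow> a\<in>{1..A} \<Longrightarrow> 0 \<le> p k a"
  by (auto simp: in_Delta_def strat_k_def)
lemma D_sum: "in_Delta K A P p \<Longrightarrow> k\<in>{1..K} \<Longrightarrow> (\<Sum>a=1..A. p k a) = P k"
  by (auto simp: in_Delta_def strat_k_def)
lemma D_le: assumes "in_Delta K A P p" "k\<in>{1..K}" "a\<in>{1..A}" shows "p k a \<le> P k"
proof -
  have "p k a \<le> (\<Sum>a=1..A. p k a)"
    by (rule member_le_sum) (use assms D_nonneg in auto)
  thus ?thesis using D_sum assms by simp
qed
lemma SS_ge: assumes "in_Delta K A P p" "a\<in>{1..A}" shows "s a \<le> SS p a"
proof -
  have "0 \<le> (\<Sum>l=1..K. g l a * p l a)"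
  proof (rule sum_nonneg)
    fix l assume l: "l \<in> {1..K}"
    have "0 \<le> g l a" using gpos l assms by (auto intro: less_imp_le)
    moreover have "0 \<le> p l a" using D_nonneg assms l by auto
    ultimately show "0 \<le> g l a * p l a" by simp
  qed
  thus ?thesis by (simp add: SS_def)
qed
lemma SS_pos: "in_Delta K A P p \<Longrightarrow> a\<in>{1..A} \<Longrightarrow> 0 < SS p a"
  using SS_ge spos by (meson less_le_trans)
lemma vel_eq: "vel K b s g p k a = b a * g k a / SS p a"
  by (simp add: vel_def SS_def)

lemma ln_diff_le: "0 < x \<Longrightarrow> 0 < (y::real) \<Longrightarrow> ln y - ln x \<le> (y - x) / x"
proof -
  assume x: "0 < x" and y: "0 < y"
  have "ln (y/x) \<le> y/x - 1" using x y by (intro ln_le_minus_one) simp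
  thus ?thesis using x y by (simp add: ln_div diff_divide_distrib)
qed

lemma concave:
  assumes q: "in_Delta K A P q" and p: "in_Delta K A P p"
  shows "Phi q - Phi p \<le> (\<Sum>k=1..K. \<Sum>a=1..A. (q k a - p k a) * vel K b s g p k a)"
proof -
  have "Phi q - Phi p = (\<Sum>a=1..A. b a * (ln (SS q a) - ln (SS p a)))"
    by (simp add: Phi_def sum_subtractf right_diff_distrib)
  also have "\<dots> \<le> (\<Sum>a=1..A. b a * ((SS q a - SS p a) / SS p a))"
  proof (rule sum_mono)
    fix a assume a: "a \<in> {1..A}"
    have "ln (SS q a) - ln (SS p a) \<le> (SS q a - SS p a) / SS p a"
      using SS_pos q p a by (intro ln_diff_le) auto
    moreover have "0 \<le> b a" using bpos a by (auto intro: less_imp_le)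
    ultimately show "b a * (ln (SS q a) - ln (SS p a)) \<le> b a * ((SS q a - SS p a) / SS p a)"
      by (rule mult_left_mono)
  qed
  also have "\<dots> = (\<Sum>a=1..A. \<Sum>k=1..K. (q k a - p k a) * vel K b s g p k a)"
  proof (rule sum.cong[OF refl])
    fix a
    have e: "SS q a - SS p a = (\<Sum>l=1..K. g l a * (q l a - p l a))"
      by (simp add: SS_def sum_subtractf right_diff_distrib)
    have "b a * ((SS q a - SS p a) / SS p a) = (\<Sum>l=1..K. g l a * (q l a - p l a)) * (b a / SS p a)"
      unfolding e by simp
    also have "\<dots> = (\<Sum>k=1..K. (q k a - p k a) * vel K b s g p k a)"
      by (simp add: sum_distrib_right vel_eq sum_divide_distrib sum_distrib_left mult_ac)
    finally show "b a * ((SS q a - SS p a) / SS p a) = (\<Sum>k=1..K. (q k a - p k a) * vel K b s g p k a)" .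
  qed
  also have "\<dots> = (\<Sum>k=1..K. \<Sum>a=1..A. (q k a - p k a) * vel K b s g p k a)"
    by (rule sum.swap)
  finally show ?thesis .
qed


definition Dk where "Dk p k a = s a + (\<Sum>l\<in>{1..K} - {k}. g l a * p l a)"

lemma payoff_eq:
  assumes p: "in_Delta K A P p" and k: "k \<in> {1..K}"
  shows "payoff K A b s g p k = Phi p - (\<Sum>a=1..A. b a * ln (Dk p k a))"
proof -
  have "payoff K A b s g p k = (\<Sum>a=1..A. b a * (ln (SS p a) - ln (Dk p k a)))"
    unfolding payoff_def
  proof (rule sum.cong[OF refl])
    fix a assume a: "a \<in> {1..A}"
    have "0 \<le> (\<Sum>l\<in>{1..K} - {k}. g l a * p l a)"
    proof (rule sum_nonneg)
      fix l assume l: "l \<in> {1..K} - {k}"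
      have "0 \<le> g l a" using gpos l a by (auto intro: less_imp_le)
      moreover have "0 \<le> p l a" using D_nonneg p l a by auto
      ultimately show "0 \<le> g l a * p l a" by simp
    qed
    hence Dpos: "0 < Dk p k a" using spos a by (simp add: Dk_def add_pos_nonneg)
    have SSe: "SS p a = Dk p k a + g k a * p k a"
      using k by (simp add: SS_def Dk_def sum.remove)
    have "1 + g k a * p k a / (s a + (\<Sum>l\<in>{1..K} - {k}. g l a * p l a)) = SS p a / Dk p k a"
      using Dpos unfolding SSe by (simp add: Dk_def field_simps)
    moreover have "ln (SS p a / Dk p k a) = ln (SS p a) - ln (Dk p k a)"
      using Dpos SS_pos[OF p a] by (simp add: ln_div)
    ultimately show "b a * ln (1 + g k a * p k a / (s a + (\<Sum>l\<in>{1..K} - {k}. g l a * p l a))) =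
       b a * (ln (SS p a) - ln (Dk p k a))" by simp
  qed
  also have "\<dots> = Phi p - (\<Sum>a=1..A. b a * ln (Dk p k a))"
    by (simp add: Phi_def sum_subtractf right_diff_distrib)
  finally show ?thesis .
qed

lemma max_imp_nash: assumes "is_max q" shows "nash_eq K A P b s g q"
  unfolding nash_eq_def
proof (intro conjI ballI allI impI)
  show q: "in_Delta K A P q" using assms is_max_def by auto
  fix k r assume k: "k \<in> {1..K}" and r: "strat_k A r (P k)"
  have q': "in_Delta K A P (q(k := r))" using q r by (auto simp: in_Delta_def)
  have "Dk (q(k := r)) k = Dk q k" by (auto simp: Dk_def intro!: sum.cong)
  moreover have "Phi (q(k := r)) \<le> Phi q" using assms q' is_max_def by auto
  ultimately show "payoff K A b s g (q(k := r)) k \<le> payoff K A b s g q k"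
    using payoff_eq[OF q k] payoff_eq[OF q' k] by simp
qed


lemma Phi_tendsto:
  assumes r: "in_Delta K A P r" and x: "\<forall>k\<in>{1..K}. \<forall>a\<in>{1..A}. (\<lambda>n. x n k a) \<longlonglongrightarrow> r k a"
  shows "(\<lambda>n. Phi (x n)) \<longlonglongrightarrow> Phi r"
  unfolding Phi_def
proof (intro tendsto_sum tendsto_mult tendsto_const)
  fix a assume a: "a \<in> {1..A}"
  have "(\<lambda>n. SS (x n) a) \<longlonglongrightarrow> SS r a"
    unfolding SS_def using x a by (auto intro!: tendsto_intros)
  moreover have "SS r a \<noteq> 0" using SS_pos[OF r a] by simp
  ultimately show "(\<lambda>n. ln (SS (x n) a)) \<longlonglongrightarrow> ln (SS r a)" by (rule tendsto_ln)
qed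

lemma limit_point:
  assumes x: "\<And>n. in_Delta K A P (x n)" and M: "\<And>r. in_Delta K A P r \<Longrightarrow> Phi r \<le> M"
    and big: "\<And>n. M - inverse (real (Suc n)) < Phi (x n)"
  shows "\<exists>rr q. strict_mono rr \<and> is_max q \<and> Phi q = M \<and>
     (\<forall>k\<in>{1..K}. \<forall>a\<in>{1..A}. (\<lambda>n. x (rr n) k a) \<longlonglongrightarrow> q k a)"
proof -
  define B where "B = (\<Sum>k=1..K. P k)"
  have bnd: "\<bar>(\<lambda>n i. x n (fst i) (snd i)) n i\<bar> \<le> B" if i: "i \<in> {1..K} \<times> {1..A}" for n i
  proof -
    have "0 \<le> x n (fst i) (snd i)" using D_nonneg[OF x] i by auto
    moreover have "x n (fst i) (snd i) \<le> P (fst i)" using D_le[OF x] i by auto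
    moreover have "P (fst i) \<le> B" unfolding B_def
      by (rule member_le_sum) (use i Ppos in \<open>auto intro: less_imp_le\<close>)
    ultimately show ?thesis by simp
  qed
  obtain rr l where rr: "strict_mono rr"
    and l: "\<forall>i\<in>{1..K} \<times> {1..A}. (\<lambda>n. x (rr n) (fst i) (snd i)) \<longlonglongrightarrow> l i"
    using BW_finite[of "{1..K} \<times> {1..A}" "\<lambda>n i. x n (fst i) (snd i)" B] bnd by auto
  define q where "q = (\<lambda>k a. l (k, a))"
  have conv: "\<forall>k\<in>{1..K}. \<forall>a\<in>{1..A}. (\<lambda>n. x (rr n) k a) \<longlonglongrightarrow> q k a"
    using l by (auto simp: q_def)
  have qD: "in_Delta K A P q"
    unfolding in_Delta_def strat_k_def
  proof (intro ballI conjI)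
    fix k a assume k: "k \<in> {1..K}" and a: "a \<in> {1..A}"
    show "0 \<le> q k a"
      by (rule LIMSEQ_le_const[OF conv[rule_format, OF k a]]) (use D_nonneg[OF x] k a in auto)
  next
    fix k assume k: "k \<in> {1..K}"
    have "(\<lambda>n. \<Sum>a=1..A. x (rr n) k a) \<longlonglongrightarrow> (\<Sum>a=1..A. q k a)"
      using conv k by (auto intro!: tendsto_sum)
    moreover have "(\<lambda>n. \<Sum>a=1..A. x (rr n) k a) = (\<lambda>n. P k)" using D_sum[OF x k] by simp
    ultimately show "(\<Sum>a=1..A. q k a) = P k" using LIMSEQ_unique tendsto_const by metis
  qed
  have t1: "(\<lambda>n. Phi (x (rr n))) \<longlonglongrightarrow> Phi q" using Phi_tendsto[OF qD] conv by auto
  have t2: "(\<lambda>n. M - inverse (real (Suc n))) \<longlonglongrightarrow> M - 0"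
    by (intro tendsto_diff tendsto_const LIMSEQ_inverse_real_of_nat)
  have le: "M - inverse (real (Suc n)) \<le> Phi (x (rr n))" for n
  proof -
    have "inverse (real (Suc (rr n))) \<le> inverse (real (Suc n))"
      using seq_suble[OF rr, of n] by (intro le_imp_inverse_le) auto
    thus ?thesis using big[of "rr n"] by linarith
  qed
  have "M \<le> Phi q" using LIMSEQ_le[OF t2 t1] le by auto
  moreover have "Phi q \<le> M" using M qD by auto
  ultimately have "Phi q = M" by simp
  moreover have "is_max q" using qD M \<open>Phi q = M\<close> by (auto simp: is_max_def)
  ultimately show ?thesis using rr conv by blast
qed

lemma max_exists:
  assumes p0: "in_Delta K A P p0" shows "\<exists>q. is_max q"
proof -
  define U where "U = (\<Sum>a=1..A. b a * ln (s a + (\<Sum>l=1..K. g l a * P l)))"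
  have ub: "Phi r \<le> U" if r: "in_Delta K A P r" for r
    unfolding Phi_def U_def
  proof (rule sum_mono)
    fix a assume a: "a \<in> {1..A}"
    have "SS r a \<le> s a + (\<Sum>l=1..K. g l a * P l)"
      unfolding SS_def
    proof -
      have "(\<Sum>l=1..K. g l a * r l a) \<le> (\<Sum>l=1..K. g l a * P l)"
      proof (rule sum_mono)
        fix l assume l: "l \<in> {1..K}"
        have "0 \<le> g l a" using gpos l a by (auto intro: less_imp_le)
        thus "g l a * r l a \<le> g l a * P l" using D_le[OF r l a] by (rule mult_left_mono[rotated])
      qed
      thus "s a + (\<Sum>l = 1..K. g l a * r l a) \<le> s a + (\<Sum>l = 1..K. g l a * P l)" by simp
    qed
    hence "ln (SS r a) \<le> ln (s a + (\<Sum>l=1..K. g l a * P l))"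
      using SS_pos[OF r a] by simp
    moreover have "0 \<le> b a" using bpos a by (auto intro: less_imp_le)
    ultimately show "b a * ln (SS r a) \<le> b a * ln (s a + (\<Sum>l=1..K. g l a * P l))"
      by (rule mult_left_mono)
  qed
  define M where "M = Sup (Phi ` {r. in_Delta K A P r})"
  have bdd: "bdd_above (Phi ` {r. in_Delta K A P r})" using ub by (auto intro!: bdd_aboveI)
  have M: "Phi r \<le> M" if "in_Delta K A P r" for r
    unfolding M_def using bdd that by (auto intro!: cSup_upper)
  have "\<exists>r. in_Delta K A P r \<and> M - inverse (real (Suc n)) < Phi r" for n
  proof -
    have "M - inverse (real (Suc n)) < M" by simp
    then obtain y where "y \<in> Phi ` {r. in_Delta K A P r}" "M - inverse (real (Suc n)) < y"
      unfolding M_def using less_cSup_iff[OF _ bdd] p0 by (metis M_def empty_iff image_eqI mem_Collect_eq)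
    thus ?thesis by auto
  qed
  then obtain x where x: "\<And>n. in_Delta K A P (x n)" "\<And>n. M - inverse (real (Suc n)) < Phi (x n)"
    by metis
  from limit_point[OF x(1) M x(2)] show ?thesis by blast
qed


abbreviation "VV p k a \<equiv> vel K b s g p k a - vel_avg K A P b s g p k"

lemma vel_nonneg: "in_Delta K A P p \<Longrightarrow> k\<in>{1..K} \<Longrightarrow> a\<in>{1..A} \<Longrightarrow> 0 \<le> vel K b s g p k a"
  using SS_pos[of p a] bpos gpos by (auto simp: vel_eq intro!: divide_nonneg_pos mult_nonneg_nonneg less_imp_le)

lemma avg_bound:
  assumes p: "in_Delta K A P p" and k: "k\<in>{1..K}"
  shows "vel_avg K A P b s g p k \<le> (\<Sum>c=1..A. b c * g k c / s c)"
proof -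
  have "(\<Sum>c=1..A. p k c * vel K b s g p k c) \<le> (\<Sum>c=1..A. P k * (b c * g k c / s c))"
  proof (rule sum_mono)
    fix c assume c: "c \<in> {1..A}"
    have v: "vel K b s g p k c \<le> b c * g k c / s c"
      unfolding vel_eq
      using SS_ge[OF p c] SS_pos[OF p c] spos bpos gpos c k
      by (intro divide_left_mono mult_nonneg_nonneg) (auto intro: less_imp_le mult_pos_pos)
    have "p k c * vel K b s g p k c \<le> P k * vel K b s g p k c"
      using D_le[OF p k c] vel_nonneg[OF p k c] by (rule mult_right_mono)
    also have "\<dots> \<le> P k * (b c * g k c / s c)"
      using v Ppos k by (intro mult_left_mono) (auto intro: less_imp_le)
    finally show "p k c * vel K b s g p k c \<le> P k * (b c * g k c / s c)" .
  qed
  hence "(\<Sum>c=1..A. p k c * vel K b s g p k c) / P k \<le> (\<Sum>c=1..A. P k * (b c * g k c / s c)) / P k"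
    using Ppos k by (intro divide_right_mono) (auto intro: less_imp_le)
  also have "\<dots> = (\<Sum>c=1..A. b c * g k c / s c)"
  proof -
    have "0 < P k" using Ppos k by blast
    hence "P k \<noteq> 0" by simp
    thus ?thesis by (simp add: sum_divide_distrib)
  qed
  finally show ?thesis by (simp add: vel_avg_def)
qed

lemma sol_D: "replicator_solution K A P b s g p \<Longrightarrow> 0 \<le> t \<Longrightarrow> in_Delta K A P (p t)"
  by (simp add: replicator_solution_def)

lemma sol_deriv: "replicator_solution K A P b s g p \<Longrightarrow> 0 \<le> t \<Longrightarrow> k\<in>{1..K} \<Longrightarrow> a\<in>{1..A} \<Longrightarrow>
   ((\<lambda>\<tau>. p \<tau> k a) has_real_derivative p t k a * VV (p t) k a) (at t within {0..})"
  by (simp add: replicator_solution_def)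

lemma sol_pos:
  assumes sol: "replicator_solution K A P b s g p" and k: "k\<in>{1..K}" and a: "a\<in>{1..A}"
    and p0: "0 < p 0 k a" and t: "0 \<le> t"
  shows "0 < p t k a"
proof -
  define C where "C = (\<Sum>c=1..A. b c * g k c / s c)"
  define f where "f = (\<lambda>\<tau>. p \<tau> k a * exp (C * \<tau>))"
  define f' where "f' = (\<lambda>\<tau>. p \<tau> k a * VV (p \<tau>) k a * exp (C * \<tau>) + p \<tau> k a * (exp (C * \<tau>) * C))"
  have d: "(f has_real_derivative f' \<tau>) (at \<tau> within {0..})" if "0 \<le> \<tau>" for \<tau>
    unfolding f_def f'_def
    by (auto intro!: derivative_eq_intros sol_deriv[OF sol that k a])
  have nn: "0 \<le> f' \<tau>" if \<tau>: "0 \<le> \<tau>" for \<tau>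
  proof -
    have pD: "in_Delta K A P (p \<tau>)" using sol_D[OF sol \<tau>] .
    have "vel_avg K A P b s g (p \<tau>) k \<le> C" unfolding C_def by (rule avg_bound[OF pD k])
    hence "0 \<le> VV (p \<tau>) k a + C" using vel_nonneg[OF pD k a] by linarith
    moreover have "0 \<le> p \<tau> k a" using D_nonneg[OF pD k a] .
    ultimately have "0 \<le> p \<tau> k a * exp (C * \<tau>) * (VV (p \<tau>) k a + C)" by simp
    thus ?thesis by (simp add: f'_def algebra_simps)
  qed
  have "f 0 \<le> f t" by (rule mono_from_deriv[OF d nn, of 0]) (use t in auto)
  hence "p 0 k a \<le> p t k a * exp (C * t)" by (simp add: f_def)
  hence "0 < p t k a * exp (C * t)" using p0 by linarith
  thus ?thesis by (simp add: zero_less_mult_iff)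
qed


lemma VV_sum:
  assumes q: "in_Delta K A P q" and r: "in_Delta K A P r"
  shows "(\<Sum>k=1..K. \<Sum>a=1..A. q k a * VV r k a) = (\<Sum>k=1..K. \<Sum>a=1..A. (q k a - r k a) * vel K b s g r k a)"
proof (rule sum.cong[OF refl])
  fix k assume k: "k \<in> {1..K}"
  have Pk: "P k \<noteq> 0" using Ppos k by (metis less_irrefl)
  have "(\<Sum>a=1..A. q k a * VV r k a) = (\<Sum>a=1..A. q k a * vel K b s g r k a) - (\<Sum>a=1..A. q k a) * vel_avg K A P b s g r k"
    by (simp add: right_diff_distrib sum_subtractf sum_distrib_right)
  also have "\<dots> = (\<Sum>a=1..A. q k a * vel K b s g r k a) - (\<Sum>a=1..A. r k a * vel K b s g r k a)"
    using D_sum[OF q k] Pk by (simp add: vel_avg_def)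
  also have "\<dots> = (\<Sum>a=1..A. (q k a - r k a) * vel K b s g r k a)"
    by (simp add: left_diff_distrib sum_subtractf)
  finally show "(\<Sum>a=1..A. q k a * VV r k a) = (\<Sum>a=1..A. (q k a - r k a) * vel K b s g r k a)" .
qed

lemma Hderiv_le:
  assumes q: "in_Delta K A P q" and r: "in_Delta K A P r"
  shows "(\<Sum>k=1..K. \<Sum>a=1..A. - (q k a * VV r k a)) \<le> Phi r - Phi q"
proof -
  have "(\<Sum>k=1..K. \<Sum>a=1..A. - (q k a * VV r k a)) = - (\<Sum>k=1..K. \<Sum>a=1..A. q k a * VV r k a)"
    by (simp add: sum_negf)
  thus ?thesis using VV_sum[OF q r] concave[OF q r] by linarith
qed

lemma H_deriv:
  assumes sol: "replicator_solution K A P b s g p" and q: "in_Delta K A P q"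
    and KL: "KL_finite K A q (p 0)" and t: "0 \<le> t"
  shows "((\<lambda>\<tau>. Hq q (p \<tau>)) has_real_derivative (\<Sum>k=1..K. \<Sum>a=1..A. - (q k a * VV (p t) k a))) (at t within {0..})"
  unfolding Hq_def
proof (intro DERIV_sum)
  fix k a assume k: "k \<in> {1..K}" and a: "a \<in> {1..A}"
  show "((\<lambda>\<tau>. if 0 < q k a then q k a * (ln (q k a) - ln (p \<tau> k a)) else 0) has_real_derivative
          - (q k a * VV (p t) k a)) (at t within {0..})"
  proof (cases "0 < q k a")
    case True
    have pp: "0 < p t k a" using sol_pos[OF sol k a _ t] KL True k a by (auto simp: KL_finite_def)
    have "((\<lambda>\<tau>. q k a * (ln (q k a) - ln (p \<tau> k a))) has_real_derivative
            - (q k a * VV (p t) k a)) (at t within {0..})"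
      using pp by (auto intro!: derivative_eq_intros sol_deriv[OF sol t k a] simp: algebra_simps)
    thus ?thesis using True by simp
  next
    case False
    hence "q k a = 0" using D_nonneg[OF q k a] by simp
    thus ?thesis by simp
  qed
qed


lemma hell_term:
  fixes q p :: real
  assumes q: "0 \<le> q" and p: "0 \<le> p" and qp: "0 < q \<longrightarrow> 0 < p"
  shows "(sqrt q - sqrt p)^2 + (q - p) \<le> (if 0 < q then q * (ln q - ln p) else 0)"
proof (cases "0 < q")
  case True
  hence pp: "0 < p" using qp by simp
  have "ln (sqrt p / sqrt q) \<le> sqrt p / sqrt q - 1"
    using True pp by (intro ln_le_minus_one) simp
  moreover have "ln (sqrt p / sqrt q) = (ln p - ln q) / 2"
    using True pp by (simp add: ln_div ln_sqrt)
  ultimately have "2 - 2 * (sqrt p / sqrt q) \<le> ln q - ln p" by simp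
  hence L: "q * (2 - 2 * (sqrt p / sqrt q)) \<le> q * (ln q - ln p)"
    using True by (intro mult_left_mono) auto
  have E: "q * (2 - 2 * (sqrt p / sqrt q)) = (sqrt q - sqrt p)^2 + (q - p)"
  proof -
    have sq: "sqrt q * sqrt q = q" "sqrt p * sqrt p = p" using q p by auto
    have "q * (sqrt p / sqrt q) = sqrt q * sqrt p" using True
      by (metis sq(1) nonzero_mult_div_cancel_left real_sqrt_gt_0_iff less_irrefl mult.commute times_divide_eq_right)
    moreover have "q * (2 - 2 * (sqrt p / sqrt q)) = 2*q - 2*(q*(sqrt p / sqrt q))"
      by (simp add: right_diff_distrib)
    moreover have "(sqrt q - sqrt p)^2 = sqrt q * sqrt q - 2 * (sqrt q * sqrt p) + sqrt p * sqrt p"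
      by (simp add: power2_eq_square algebra_simps)
    ultimately show ?thesis using sq by simp
  qed
  have "(sqrt q - sqrt p)^2 + (q - p) \<le> q * (ln q - ln p)" using L E by linarith
  thus ?thesis using True by simp
next
  case False
  hence "q = 0" using q by simp
  thus ?thesis using p by simp
qed

lemma hellinger:
  assumes q: "in_Delta K A P q" and r: "in_Delta K A P r"
    and qr: "\<forall>k\<in>{1..K}. \<forall>a\<in>{1..A}. 0 < q k a \<longrightarrow> 0 < r k a"
  shows "(\<Sum>k=1..K. \<Sum>a=1..A. (sqrt (q k a) - sqrt (r k a))^2) \<le> Hq q r"
proof -
  have "(\<Sum>k=1..K. \<Sum>a=1..A. (sqrt (q k a) - sqrt (r k a))^2 + (q k a - r k a)) \<le> Hq q r"
    unfolding Hq_def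
    by (intro sum_mono hell_term) (use D_nonneg[OF q] D_nonneg[OF r] qr in auto)
  moreover have "(\<Sum>k=1..K. \<Sum>a=1..A. (sqrt (q k a) - sqrt (r k a))^2 + (q k a - r k a))
      = (\<Sum>k=1..K. \<Sum>a=1..A. (sqrt (q k a) - sqrt (r k a))^2)"
  proof (rule sum.cong[OF refl])
    fix k assume k: "k \<in> {1..K}"
    show "(\<Sum>a=1..A. (sqrt (q k a) - sqrt (r k a))^2 + (q k a - r k a)) = (\<Sum>a=1..A. (sqrt (q k a) - sqrt (r k a))^2)"
      using D_sum[OF q k] D_sum[OF r k] by (simp add: sum.distrib sum_subtractf)
  qed
  ultimately show ?thesis by simp
qed

lemma hellinger_coord:
  assumes q: "in_Delta K A P q" and r: "in_Delta K A P r"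
    and qr: "\<forall>k\<in>{1..K}. \<forall>a\<in>{1..A}. 0 < q k a \<longrightarrow> 0 < r k a"
    and k: "k \<in> {1..K}" and a: "a \<in> {1..A}"
  shows "(sqrt (q k a) - sqrt (r k a))^2 \<le> Hq q r"
proof -
  have "(sqrt (q k a) - sqrt (r k a))^2 \<le> (\<Sum>a=1..A. (sqrt (q k a) - sqrt (r k a))^2)"
    by (rule member_le_sum) (use a in auto)
  also have "\<dots> \<le> (\<Sum>k=1..K. \<Sum>a=1..A. (sqrt (q k a) - sqrt (r k a))^2)"
    by (rule member_le_sum[where f = "\<lambda>k. \<Sum>a=1..A. (sqrt (q k a) - sqrt (r k a))^2"])
       (use k in \<open>auto intro: sum_nonneg\<close>)
  finally show ?thesis using hellinger[OF q r qr] by linarith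
qed


lemma pos_all:
  assumes sol: "replicator_solution K A P b s g p" and KL: "KL_finite K A q (p 0)" and t: "0 \<le> t"
  shows "\<forall>k\<in>{1..K}. \<forall>a\<in>{1..A}. 0 < q k a \<longrightarrow> 0 < p t k a"
  using sol_pos[OF sol _ _ _ t] KL by (auto simp: KL_finite_def)

lemma H_mono:
  assumes sol: "replicator_solution K A P b s g p" and q: "is_max q"
    and KL: "KL_finite K A q (p 0)" and xy: "0 \<le> x" "x \<le> y"
  shows "Hq q (p y) \<le> Hq q (p x)"
proof -
  have qD: "in_Delta K A P q" using q by (simp add: is_max_def)
  define f' where "f' = (\<lambda>t. - (\<Sum>k=1..K. \<Sum>a=1..A. - (q k a * VV (p t) k a)))"
  have d: "((\<lambda>t. - Hq q (p t)) has_real_derivative f' t) (at t within {0..})" if "0 \<le> t" for t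
    unfolding f'_def by (intro DERIV_minus H_deriv[OF sol qD KL that])
  have nn: "0 \<le> f' t" if t: "0 \<le> t" for t
  proof -
    have "Phi (p t) \<le> Phi q" using q sol_D[OF sol t] by (auto simp: is_max_def)
    thus ?thesis using Hderiv_le[OF qD sol_D[OF sol t]] by (simp add: f'_def)
  qed
  have "- Hq q (p x) \<le> - Hq q (p y)" by (rule mono_from_deriv[OF d nn, of 0]) (use xy in auto)
  thus ?thesis by simp
qed

lemma H_nonneg:
  assumes sol: "replicator_solution K A P b s g p" and q: "in_Delta K A P q"
    and KL: "KL_finite K A q (p 0)" and t: "0 \<le> t"
  shows "0 \<le> Hq q (p t)"
  using hellinger[OF q sol_D[OF sol t] pos_all[OF sol KL t]]
  by (meson order_trans sum_nonneg zero_le_power2)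

lemma Hq_tendsto:
  assumes q: "in_Delta K A P q" and x: "\<forall>k\<in>{1..K}. \<forall>a\<in>{1..A}. (\<lambda>n. x n k a) \<longlonglongrightarrow> q k a"
  shows "(\<lambda>n. Hq q (x n)) \<longlonglongrightarrow> 0"
proof -
  have "(\<lambda>n. Hq q (x n)) \<longlonglongrightarrow> (\<Sum>k=1..K. \<Sum>a=1..A. (0::real))"
    unfolding Hq_def
  proof (intro tendsto_sum)
    fix k a assume k: "k \<in> {1..K}" and a: "a \<in> {1..A}"
    show "(\<lambda>n. if 0 < q k a then q k a * (ln (q k a) - ln (x n k a)) else 0) \<longlonglongrightarrow> 0"
    proof (cases "0 < q k a")
      case True
      have "(\<lambda>n. q k a * (ln (q k a) - ln (x n k a))) \<longlonglongrightarrow> q k a * (ln (q k a) - ln (q k a))"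
        using True x k a by (intro tendsto_intros tendsto_ln) auto
      thus ?thesis using True by simp
    qed simp
  qed
  thus ?thesis by simp
qed

lemma converge:
  assumes sol: "replicator_solution K A P b s g p" and q: "is_max q"
    and KL: "KL_finite K A q (p 0)" and tt: "\<And>n. real n \<le> tt n"
    and conv: "\<forall>k\<in>{1..K}. \<forall>a\<in>{1..A}. (\<lambda>n. p (tt n) k a) \<longlonglongrightarrow> q k a"
  shows "converges_to K A p q"
proof -
  have qD: "in_Delta K A P q" using q by (simp add: is_max_def)
  have tt0: "0 \<le> tt n" for n using tt[of n] by (meson of_nat_0_le_iff order_trans)
  have Hs: "(\<lambda>n. Hq q (p (tt n))) \<longlonglongrightarrow> 0" by (rule Hq_tendsto[OF qD conv])
  have H0: "((\<lambda>t. Hq q (p t)) \<longlongrightarrow> 0) at_top"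
  proof (rule tendstoI)
    fix e :: real assume e: "0 < e"
    obtain N where N: "\<forall>n\<ge>N. dist (Hq q (p (tt n))) 0 < e"
      using Hs e LIMSEQ_def by metis
    have "Hq q (p t) < e" if "tt N \<le> t" for t
      using H_mono[OF sol q KL tt0 that] N by auto
    moreover have "0 \<le> Hq q (p t)" if "tt N \<le> t" for t
      using H_nonneg[OF sol qD KL] tt0[of N] that by auto
    ultimately show "\<forall>\<^sub>F t in at_top. dist (Hq q (p t)) 0 < e"
      unfolding eventually_at_top_linorder by (intro exI[of _ "tt N"]) auto
  qed
  show ?thesis unfolding converges_to_def
  proof (intro ballI)
    fix k a assume k: "k \<in> {1..K}" and a: "a \<in> {1..A}"
    have ev0: "\<forall>\<^sub>F t in at_top. (0::real) \<le> t" by (rule eventually_ge_at_top)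
    have "((\<lambda>t. (sqrt (q k a) - sqrt (p t k a))^2) \<longlongrightarrow> 0) at_top"
    proof (rule tendsto_sandwich[OF _ _ tendsto_const H0])
      show "\<forall>\<^sub>F t in at_top. 0 \<le> (sqrt (q k a) - sqrt (p t k a))^2" by simp
      show "\<forall>\<^sub>F t in at_top. (sqrt (q k a) - sqrt (p t k a))^2 \<le> Hq q (p t)"
        using ev0 by eventually_elim
          (use hellinger_coord[OF qD sol_D[OF sol] pos_all[OF sol KL] k a] in auto)
    qed
    hence "((\<lambda>t. sqrt ((sqrt (q k a) - sqrt (p t k a))^2)) \<longlongrightarrow> sqrt 0) at_top"
      by (rule tendsto_real_sqrt)
    hence "((\<lambda>t. \<bar>sqrt (p t k a) - sqrt (q k a)\<bar>) \<longlongrightarrow> 0) at_top" by (simp add: abs_minus_commute)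
    hence "((\<lambda>t. sqrt (p t k a) - sqrt (q k a)) \<longlongrightarrow> 0) at_top" by (simp add: tendsto_rabs_zero_iff)
    hence "((\<lambda>t. sqrt (p t k a)) \<longlongrightarrow> sqrt (q k a)) at_top" by (simp add: LIM_zero_iff)
    hence T: "((\<lambda>t. (sqrt (p t k a))^2) \<longlongrightarrow> (sqrt (q k a))^2) at_top" by (rule tendsto_power)
    have Q: "(sqrt (q k a))^2 = q k a" using D_nonneg[OF qD k a] by simp
    have E: "\<forall>\<^sub>F t in at_top. (sqrt (p t k a))^2 = p t k a"
      using ev0 by eventually_elim (use D_nonneg[OF sol_D[OF sol] k a] in auto)
    have "((\<lambda>t. (sqrt (p t k a))^2) \<longlongrightarrow> q k a) at_top" using T Q by simp
    thus "((\<lambda>t. p t k a) \<longlongrightarrow> q k a) at_top"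
      using tendsto_cong[OF E] by blast
  qed
qed


lemma good_times:
  assumes sol: "replicator_solution K A P b s g p" and q: "is_max q" and KL: "KL_finite K A q (p 0)"
  shows "\<exists>t\<ge>real n. Phi q - inverse (real (Suc n)) < Phi (p t)"
proof (rule ccontr)
  assume "\<not> ?thesis"
  hence small: "Phi (p t) \<le> Phi q - inverse (real (Suc n))" if "real n \<le> t" for t
    using that by (meson not_le)
  have qD: "in_Delta K A P q" using q by (simp add: is_max_def)
  define d where "d = inverse (real (Suc n))"
  have dpos: "0 < d" by (simp add: d_def)
  define T where "T = real n"
  define G where "G = (\<lambda>t. - (Hq q (p t) + d * t))"
  define G' where "G' = (\<lambda>t. - ((\<Sum>k=1..K. \<Sum>a=1..A. - (q k a * VV (p t) k a)) + d))"
  have dG: "(G has_real_derivative G' t) (at t within {0..})" if "T \<le> t" for t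
  proof -
    have t: "0 \<le> t" using that by (simp add: T_def order_trans)
    show ?thesis unfolding G_def G'_def
      by (auto intro!: derivative_eq_intros H_deriv[OF sol qD KL t])
  qed
  have nn: "0 \<le> G' t" if "T \<le> t" for t
  proof -
    have t: "0 \<le> t" using that by (simp add: T_def order_trans)
    have "(\<Sum>k=1..K. \<Sum>a=1..A. - (q k a * VV (p t) k a)) \<le> Phi (p t) - Phi q"
      by (rule Hderiv_le[OF qD sol_D[OF sol t]])
    thus ?thesis using small[of t] that by (simp add: G'_def d_def T_def)
  qed
  define y where "y = T + Hq q (p T) / d + 1"
  have T0: "0 \<le> T" by (simp add: T_def)
  have "0 \<le> Hq q (p T)" by (rule H_nonneg[OF sol qD KL T0])
  hence Ty: "T \<le> y" using dpos by (simp add: y_def)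
  have "G T \<le> G y" by (rule mono_from_deriv[OF dG nn T0 order_refl Ty])
  hence "Hq q (p y) + d * y \<le> Hq q (p T) + d * T" by (simp add: G_def)
  moreover have "0 \<le> Hq q (p y)" using H_nonneg[OF sol qD KL] T0 Ty by auto
  moreover have "d * y = d * T + Hq q (p T) + d" using dpos by (simp add: y_def field_simps)
  ultimately show False using dpos by linarith
qed

lemma limit_max:
  assumes sol: "replicator_solution K A P b s g p" and q0: "is_max q0" and KL: "KL_finite K A q0 (p 0)"
  shows "\<exists>tt q. (\<forall>n. real n \<le> tt n) \<and> is_max q \<and> (\<forall>k\<in>{1..K}. \<forall>a\<in>{1..A}. (\<lambda>n. p (tt n) k a) \<longlonglongrightarrow> q k a)"
proof -
  obtain tt where tt: "\<And>n. real n \<le> tt n" "\<And>n. Phi q0 - inverse (real (Suc n)) < Phi (p (tt n))"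
    using good_times[OF sol q0 KL] by metis
  have x: "in_Delta K A P (p (tt n))" for n
    using sol_D[OF sol] tt(1)[of n] by (meson of_nat_0_le_iff order_trans)
  have M: "Phi r \<le> Phi q0" if "in_Delta K A P r" for r using q0 that by (simp add: is_max_def)
  obtain rr q where rr: "strict_mono rr" "is_max q"
    "\<forall>k\<in>{1..K}. \<forall>a\<in>{1..A}. (\<lambda>n. p (tt (rr n)) k a) \<longlonglongrightarrow> q k a"
    using limit_point[of "\<lambda>n. p (tt n)", OF x M tt(2)] by blast
  have "real n \<le> tt (rr n)" for n
    using tt(1)[of "rr n"] seq_suble[OF rr(1), of n] by (meson of_nat_le_iff order_trans)
  thus ?thesis using rr by (intro exI[of _ "\<lambda>n. tt (rr n)"] exI[of _ q]) auto
qed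


lemma Phi_cong: "(\<forall>k\<in>{1..K}. \<forall>a\<in>{1..A}. q' k a = q k a) \<Longrightarrow> Phi q' = Phi q"
  unfolding Phi_def SS_def by (intro sum.cong refl arg_cong[where f = "\<lambda>x. b _ * ln (s _ + x)"]) auto

end

theorem theorem2:
  fixes K A :: nat and P b s :: "nat \<Rightarrow> real" and g :: "nat \<Rightarrow> nat \<Rightarrow> real"
  assumes "\<forall>k\<in>{1..K}. 0 < P k"
    and "\<forall>a\<in>{1..A}. 0 < b a"
    and "\<forall>a\<in>{1..A}. 0 < s a"
    and "\<forall>k\<in>{1..K}. \<forall>a\<in>{1..A}. 0 < g k a"
  shows
    "(\<forall>q p. nash_eq K A P b s g q
         \<and> (\<forall>q'. nash_eq K A P b s g q' \<longrightarrow> (\<forall>k\<in>{1..K}. \<forall>a\<in>{1..A}. q' k a = q k a))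
         \<and> replicator_solution K A P b s g p
         \<and> KL_finite K A q (p 0)
       \<longrightarrow> converges_to K A p q)
     \<and> (\<forall>p. replicator_solution K A P b s g p \<and> interior_profile K A (p 0)
       \<longrightarrow> (\<exists>q. nash_eq K A P b s g q \<and> converges_to K A p q))"
proof -
  interpret mac K A P b s g using assms by unfold_locales
  show ?thesis
  proof (intro conjI allI impI)
    fix q p
    assume H: "nash_eq K A P b s g q
         \<and> (\<forall>q'. nash_eq K A P b s g q' \<longrightarrow> (\<forall>k\<in>{1..K}. \<forall>a\<in>{1..A}. q' k a = q k a))
         \<and> replicator_solution K A P b s g p
         \<and> KL_finite K A q (p 0)"
    hence qD: "in_Delta K A P q" and uniq: "\<And>q'. nash_eq K A P b s g q' \<Longrightarrow> (\<forall>k\<in>{1..K}. \<forall>a\<in>{1..A}. q' k a = q k a)"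
      and sol: "replicator_solution K A P b s g p" and KL: "KL_finite K A q (p 0)"
      by (auto simp: nash_eq_def)
    obtain m where m: "is_max m" using max_exists[OF qD] by blast
    have "Phi m = Phi q" using Phi_cong uniq[OF max_imp_nash[OF m]] by blast
    hence qmax: "is_max q" using m qD by (simp add: is_max_def)
    obtain tt r where tt: "\<forall>n. real n \<le> tt n" and r: "is_max r"
      and conv: "\<forall>k\<in>{1..K}. \<forall>a\<in>{1..A}. (\<lambda>n. p (tt n) k a) \<longlonglongrightarrow> r k a"
      using limit_max[OF sol qmax KL] by blast
    have "\<forall>k\<in>{1..K}. \<forall>a\<in>{1..A}. r k a = q k a" using uniq[OF max_imp_nash[OF r]] .
    hence conv': "\<forall>k\<in>{1..K}. \<forall>a\<in>{1..A}. (\<lambda>n. p (tt n) k a) \<longlonglongrightarrow> q k a" using conv by simp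
    show "converges_to K A p q" by (rule converge[OF sol qmax KL]) (use tt conv' in auto)
  next
    fix p assume H: "replicator_solution K A P b s g p \<and> interior_profile K A (p 0)"
    hence sol: "replicator_solution K A P b s g p" and int: "interior_profile K A (p 0)" by auto
    obtain m where m: "is_max m" using max_exists[OF sol_D[OF sol, of 0]] by auto
    have KLall: "KL_finite K A q (p 0)" for q using int by (simp add: KL_finite_def interior_profile_def)
    obtain tt r where tt: "\<forall>n. real n \<le> tt n" and r: "is_max r"
      and conv: "\<forall>k\<in>{1..K}. \<forall>a\<in>{1..A}. (\<lambda>n. p (tt n) k a) \<longlonglongrightarrow> r k a"
      using limit_max[OF sol m KLall] by blast
    have "converges_to K A p r" by (rule converge[OF sol r KLall]) (use tt conv in auto)
    thus "\<exists>q. nash_eq K A P b s g q \<and> converges_to K A p q" using max_imp_nash[OF r] by blast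
  qed
qed

end
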